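(* Let $V$ be a Möbius MOSVA and $(W,Y_W^L,\rho_W)$ a Möbius left $V$-module. For every $n\ge1$, $u_1,\dots,u_n\in V$, $w\in W$, $w'\in W'$, the series $\langle w',Y_W^o(u_n,z_n)\cdots Y_W^o(u_1,z_1)w\rangle$ converges absolutely when $|z_1|>\cdots>|z_n|>0$ to a rational function with the only possible poles at $z_i=0$ ($i=1,\dots,n$) and $z_i=z_j$ ($1\le i<j\le n$).
   Context: Conventions: $x$ formal variable, $z$'s complex; products of vertex operators paired with a dual vector denote the multiple complex series of coefficients times monomials. A meromorphic open-string vertex algebra (MOSVA) is a $\mathbb Z$-graded vector space $V=\coprod_{n\in\mathbb Z}V_{(n)}$ with a linear map $Y_V:V\otimes V\to V[[x,x^{-1}]]$ and a vacuum $\mathbf 1\in V$ such that: (i) $V_{(n)}=0$ for $n$ sufficiently negative; with $\mathbf d_Vv=nv$ for $v\in V_{(n)}$, $[\mathbf d_V,Y_V(v,x)]=x\frac{d}{dx}Y_V(v,x)+Y_V(\mathbf d_Vv,x)$; (ii) $Y_V(\mathbf 1,x)=1_V$, $Y_V(u,x)\mathbf 1\in V[[x]]$ and $\lim_{x\to0}Y_V(u,x)\mathbf 1=u$; (iii) with $D_Vv=\lim_{x\to0}\frac{d}{dx}Y_V(v,x)\mathbf 1$, $\frac{d}{dx}Y_V(v,x)=Y_V(D_Vv,x)=[D_V,Y_V(v,x)]$; (iv) rationality: with $V'=\coprod_nV_{(n)}^*$, for all $u_1,\dots,u_n,v\in V$, $v'\in V'$, $\langle v',Y_V(u_1,z_1)\cdots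 Y_V(u_n,z_n)v\rangle$ converges absolutely for $|z_1|>\cdots>|z_n|>0$ to a rational function with only possible poles at $z_i=0$, $z_i=z_j$ ($i\ne j$), and $\langle v',Y_V(Y_V(u_1,z_1-z_2)u_2,z_2)v\rangle$ converges absolutely for $|z_2|>|z_1-z_2|>0$ to a rational function with only possible poles at $z_1=0,z_2=0,z_1=z_2$; (v) associativity: these two agree for $|z_1|>|z_2|>|z_1-z_2|>0$. A Möbius MOSVA is a MOSVA with a representation $\rho_V$ of $\mathfrak{sl}(2)$ (basis $L_{-1},L_0,L_1$, $[L_0,L_{\pm1}]=\mp L_{\pm1}$, $[L_{-1},L_1]=-2L_0$) with $L_V(0)=\rho_V(L_0)=\mathbf d_V$, $L_V(-1)=\rho_V(L_{-1})=D_V$, $L_V(1)=\rho_V(L_1)$, and $[L_V(1),Y_V(u,x)]=Y_V(L_V(1)u,x)+2xY_V(L_V(0)u,x)+x^2Y_V(L_V(-1)u,x)$ for $u\in V$. ($L_V(1)$ lowers weight by $1$ and is locally nilpotent.) A left $V$-module is a $\mathbb C$-graded vector space $W=\coprod_{m\in\mathbb C}W_{[m]}$ with a linear map $Y_W^L:V\otimes W\to W[[x,x^{-1}]]$, an operator $\mathbf d_W$ of weight $0$ and an operator $D_W$ of weight $1$ such that: (i) $W_{[m]}=0$ when $\mathrm{Re}(m)$ is sufficiently negative; $\mathbf d_Ww=mw$ for $w\in W_{[m]}$; $[\mathbf d_W,Y_W^L(u,x)]=Y_W^L(\mathbf d_Vu,x)+x\frac{d}{dx}Y_W^L(u,x)$;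 (ii) $Y_W^L(\mathbf 1,x)=1_W$; (iii) $\frac{d}{dx}Y_W^L(u,x)=Y_W^L(D_Vu,x)=[D_W,Y_W^L(u,x)]$; (iv) rationality: with $W'=\coprod_mW_{[m]}^*$, for $u_1,\dots,u_n\in V$, $w\in W$, $w'\in W'$, $\langle w',Y_W^L(u_1,z_1)\cdots Y_W^L(u_n,z_n)w\rangle$ converges absolutely for $|z_1|>\cdots>|z_n|>0$ to a rational function with only possible poles at $z_i=0$ and $z_i=z_j$ ($i\neq j$), and $\langle w',Y_W^L(Y_V(u_1,z_1-z_2)u_2,z_2)w\rangle$ converges absolutely for $|z_2|>|z_1-z_2|>0$ to a rational function with only possible poles at $z_1=0,z_2=0,z_1=z_2$; (v) associativity: $\langle w',Y_W^L(u_1,z_1)Y_W^L(u_2,z_2)w\rangle=\langle w',Y_W^L(Y_V(u_1,z_1-z_2)u_2,z_2)w\rangle$ for $|z_1|>|z_2|>|z_1-z_2|>0$. A Möbius left $V$-module $(W,Y_W^L,\rho_W)$ is a left $V$-module with a representation $\rho_W$ of $\mathfrak{sl}(2)$ on $W$ with $L_W(j)=\rho_W(L_j)$, $L_W(-1)=D_W$, such that for $u\in V$: $[L_W(0),Y_W^L(u,x)]=Y_W^L(L_V(0)u,x)+xY_W^L(L_V(-1)u,x)$, $[L_W(1),Y_W^L(u,x)]=Y_W^L(L_V(1)u,x)+2xY_W^L(L_V(0)u,x)+x^2Y_W^L(L_V(-1)u,x)$, and for every $w\in W_{[n]}$ there is $m\in\mathbb N$ with $(L_W(0)-n)^mw=0$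 (so $\mathbf d_W$ is the semisimple part of $L_W(0)$). The opposite vertex operator is $Y_W^o(u,x)=Y_W^L(e^{xL_V(1)}(-x^{-2})^{L_V(0)}u,x^{-1})$; for homogeneous $u$ this equals $\sum_{m\ge0}\frac{(-1)^{\mathrm{wt}\,u}}{m!}x^{m-2\mathrm{wt}\,u}Y_W^L(L_V(1)^mu,x^{-1})$, a finite sum. *)

theory Defs
  imports "HOL-Analysis.Analysis"
begin

definition graded_space :: "(complex \<Rightarrow> 'a::ab_group_add \<Rightarrow> 'a) \<Rightarrow> ('i \<Rightarrow> 'a set) \<Rightarrow> bool" where
  "graded_space s G \<longleftrightarrow> vector_space s \<and> (\<forall>i. module.subspace s (G i)) \<and>
     (\<forall>v. \<exists>!c. finite {i. c i \<noteq> 0} \<and> (\<forall>i. c i \<in> G i) \<and> v = (\<Sum>i\<in>{i. c i \<noteq> 0}. c i))"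

definition component :: "('i \<Rightarrow> 'a::ab_group_add set) \<Rightarrow> 'i \<Rightarrow> 'a \<Rightarrow> 'a" where
  "component G i v = (THE c. finite {j. c j \<noteq> 0} \<and> (\<forall>j. c j \<in> G j) \<and>
                             v = (\<Sum>j\<in>{j. c j \<noteq> 0}. c j)) i"

definition graded_dual :: "(complex \<Rightarrow> 'a::ab_group_add \<Rightarrow> 'a) \<Rightarrow> ('i \<Rightarrow> 'a set) \<Rightarrow> ('a \<Rightarrow> complex) \<Rightarrow> bool" where
  "graded_dual s G f \<longleftrightarrow> Vector_Spaces.linear s (*) f \<and> finite {i. \<exists>x\<in>G i. f x \<noteq> 0}"

text \<open>A vertex operator map is encoded by its coefficients: Y u w k is the coefficient of x^k
  in Y(u,x)w.  ops Y [u1,...,un] [k1,...,kn] w = (u1)_{k1} ... (un)_{kn} w.\<close>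
fun ops :: "('v \<Rightarrow> 'w \<Rightarrow> int \<Rightarrow> 'w) \<Rightarrow> 'v list \<Rightarrow> int list \<Rightarrow> 'w \<Rightarrow> 'w" where
  "ops Y (u # us) (k # ks) w = Y u (ops Y us ks w) k"
| "ops Y _ _ w = w"

definition monom :: "complex list \<Rightarrow> int list \<Rightarrow> complex" where
  "monom zs ks = (\<Prod>i<length zs. (zs ! i) powi (ks ! i))"

text \<open>Terms of the multiple series  <f, Y(u1,z1)...Y(un,zn) w>, indexed by (k1,...,kn).\<close>
definition prod_series :: "('v \<Rightarrow> 'w \<Rightarrow> int \<Rightarrow> 'w) \<Rightarrow> ('w \<Rightarrow> complex) \<Rightarrow> 'v list \<Rightarrow> complex list \<Rightarrow> 'w \<Rightarrow> int list \<Rightarrow> complex" where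
  "prod_series Y f us zs w = (\<lambda>ks. f (ops Y us ks w) * monom zs ks)"

text \<open>Terms of the double series  <f, Y_W(Y_V(u1,z1-z2)u2,z2) w>.\<close>
definition iter_series :: "('v \<Rightarrow> 'v \<Rightarrow> int \<Rightarrow> 'v) \<Rightarrow> ('v \<Rightarrow> 'w \<Rightarrow> int \<Rightarrow> 'w) \<Rightarrow> ('w \<Rightarrow> complex) \<Rightarrow> 'v \<Rightarrow> 'v \<Rightarrow> complex \<Rightarrow> complex \<Rightarrow> 'w \<Rightarrow> int \<times> int \<Rightarrow> complex" where
  "iter_series YV YW f u1 u2 z1 z2 w = (\<lambda>(k1, k2). f (YW (YV u1 u2 k1) w k2) * (z1 - z2) powi k1 * z2 powi k2)"

definition abs_conv_to :: "('k \<Rightarrow> complex) \<Rightarrow> 'k set \<Rightarrow> complex \<Rightarrow> bool" where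
  "abs_conv_to F I s \<longleftrightarrow> (\<lambda>k. norm (F k)) summable_on I \<and> (F has_sum s) I"

definition polynomial_fn :: "nat \<Rightarrow> (complex list \<Rightarrow> complex) \<Rightarrow> bool" where
  "polynomial_fn n P \<longleftrightarrow> (\<exists>S c. finite S \<and>
     (\<forall>zs. length zs = n \<longrightarrow> P zs = (\<Sum>\<alpha>\<in>S. c \<alpha> * (\<Prod>i<n. (zs ! i) ^ (\<alpha> ! i)))))"

definition rational_poles :: "nat \<Rightarrow> (complex list \<Rightarrow> complex) \<Rightarrow> bool" where
  "rational_poles n R \<longleftrightarrow> (\<exists>P a b. polynomial_fn n P \<and>
     (\<forall>zs. length zs = n \<and> (\<forall>i<n. zs ! i \<noteq> 0) \<and> (\<forall>i j. i < j \<and> j < n \<longrightarrow> zs ! i \<noteq> zs ! j) \<longrightarrow>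
        R zs = P zs / ((\<Prod>i<n. (zs ! i) ^ a i) *
                       (\<Prod>p\<in>{(i, j). i < j \<and> j < n}. (zs ! fst p - zs ! snd p) ^ b (fst p) (snd p)))))"

definition region_desc :: "complex list \<Rightarrow> bool" where
  "region_desc zs \<longleftrightarrow> (\<forall>i. Suc i < length zs \<longrightarrow> norm (zs ! Suc i) < norm (zs ! i)) \<and>
                       (\<forall>i<length zs. zs ! i \<noteq> 0)"

definition product_rationality :: "('i \<Rightarrow> 'w::ab_group_add set) \<Rightarrow> ('w \<Rightarrow> complex) set \<Rightarrow> ('v \<Rightarrow> 'w \<Rightarrow> int \<Rightarrow> 'w) \<Rightarrow> bool" where
  "product_rationality G D Y \<longleftrightarrow> (\<forall>n us w f. f \<in> D \<and> length us = n \<longrightarrow>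
     (\<exists>R. rational_poles n R \<and> (\<forall>zs. length zs = n \<and> region_desc zs \<longrightarrow>
          abs_conv_to (prod_series Y f us zs w) {ks. length ks = n} (R zs))))"

definition iterate_rationality :: "('w \<Rightarrow> complex) set \<Rightarrow> ('v \<Rightarrow> 'v \<Rightarrow> int \<Rightarrow> 'v) \<Rightarrow> ('v \<Rightarrow> 'w \<Rightarrow> int \<Rightarrow> 'w) \<Rightarrow> bool" where
  "iterate_rationality D YV YW \<longleftrightarrow> (\<forall>u1 u2 w f. f \<in> D \<longrightarrow>
     (\<exists>R. rational_poles 2 R \<and> (\<forall>z1 z2. norm z2 > norm (z1 - z2) \<and> norm (z1 - z2) > 0 \<longrightarrow>
          abs_conv_to (iter_series YV YW f u1 u2 z1 z2 w) UNIV (R [z1, z2]))))"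

definition associativity :: "('w \<Rightarrow> complex) set \<Rightarrow> ('v \<Rightarrow> 'v \<Rightarrow> int \<Rightarrow> 'v) \<Rightarrow> ('v \<Rightarrow> 'w \<Rightarrow> int \<Rightarrow> 'w) \<Rightarrow> bool" where
  "associativity D YV YW \<longleftrightarrow> (\<forall>u1 u2 w f z1 z2. f \<in> D \<and>
      norm z1 > norm z2 \<and> norm z2 > norm (z1 - z2) \<and> norm (z1 - z2) > 0 \<longrightarrow>
      infsum (prod_series YW f [u1, u2] [z1, z2] w) {ks. length ks = 2} =
      infsum (iter_series YV YW f u1 u2 z1 z2 w) UNIV)"

record 'v mosva_data =
  vs   :: "complex \<Rightarrow> 'v \<Rightarrow> 'v"
  vgr  :: "int \<Rightarrow> 'v set"
  vY   :: "'v \<Rightarrow> 'v \<Rightarrow> int \<Rightarrow> 'v"   (* vY u v k = coefficient of x^k in Y_V(u,x)v *)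
  vvac :: "'v"
  vd   :: "'v \<Rightarrow> 'v"
  vD   :: "'v \<Rightarrow> 'v"
  vL1  :: "'v \<Rightarrow> 'v"

definition mosva :: "('v::ab_group_add, 'x) mosva_data_scheme \<Rightarrow> bool" where
  "mosva V \<longleftrightarrow>
     graded_space (vs V) (vgr V) \<and>
     (\<forall>u k. Vector_Spaces.linear (vs V) (vs V) (\<lambda>v. vY V u v k)) \<and>
     (\<forall>v k. Vector_Spaces.linear (vs V) (vs V) (\<lambda>u. vY V u v k)) \<and>
     (\<exists>N. \<forall>n<N. vgr V n = {0}) \<and>
     Vector_Spaces.linear (vs V) (vs V) (vd V) \<and>
     (\<forall>n v. v \<in> vgr V n \<longrightarrow> vd V v = vs V (of_int n) v) \<and>
     (\<forall>u v k. vd V (vY V u v k) - vY V u (vd V v) k = vs V (of_int k) (vY V u v k) + vY V (vd V u) v k) \<and>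
     (\<forall>v k. vY V (vvac V) v k = (if k = 0 then v else 0)) \<and>
     (\<forall>u k. k < 0 \<longrightarrow> vY V u (vvac V) k = 0) \<and>
     (\<forall>u. vY V u (vvac V) 0 = u) \<and>
     (\<forall>v. vD V v = vY V v (vvac V) 1) \<and>
     (\<forall>u v k. vs V (of_int (k + 1)) (vY V u v (k + 1)) = vY V (vD V u) v k) \<and>
     (\<forall>u v k. vD V (vY V u v k) - vY V u (vD V v) k = vY V (vD V u) v k) \<and>
     product_rationality (vgr V) {f. graded_dual (vs V) (vgr V) f} (vY V) \<and>
     iterate_rationality {f. graded_dual (vs V) (vgr V) f} (vY V) (vY V) \<and>
     associativity {f. graded_dual (vs V) (vgr V) f} (vY V) (vY V)"

definition mobius_mosva :: "('v::ab_group_add, 'x) mosva_data_scheme \<Rightarrow> bool" where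
  "mobius_mosva V \<longleftrightarrow> mosva V \<and>
     Vector_Spaces.linear (vs V) (vs V) (vD V) \<and>
     Vector_Spaces.linear (vs V) (vs V) (vL1 V) \<and>
     (\<forall>v. vd V (vD V v) - vD V (vd V v) = vD V v) \<and>
     (\<forall>v. vd V (vL1 V v) - vL1 V (vd V v) = - vL1 V v) \<and>
     (\<forall>v. vD V (vL1 V v) - vL1 V (vD V v) = vs V (-2) (vd V v)) \<and>
     (\<forall>u v k. vL1 V (vY V u v k) - vY V u (vL1 V v) k =
        vY V (vL1 V u) v k + vs V 2 (vY V (vd V u) v (k - 1)) + vY V (vD V u) v (k - 2))"

record ('v, 'w) lmod_data =
  ws  :: "complex \<Rightarrow> 'w \<Rightarrow> 'w"
  wgr :: "complex \<Rightarrow> 'w set"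
  wY  :: "'v \<Rightarrow> 'w \<Rightarrow> int \<Rightarrow> 'w"   (* coefficient of x^k in Y^L_W(u,x)w *)
  wd  :: "'w \<Rightarrow> 'w"
  wD  :: "'w \<Rightarrow> 'w"
  wL0 :: "'w \<Rightarrow> 'w"
  wL1 :: "'w \<Rightarrow> 'w"

definition left_module :: "('v::ab_group_add, 'x) mosva_data_scheme \<Rightarrow> ('v, 'w::ab_group_add, 'y) lmod_data_scheme \<Rightarrow> bool" where
  "left_module V W \<longleftrightarrow>
     graded_space (ws W) (wgr W) \<and>
     (\<forall>u k. Vector_Spaces.linear (ws W) (ws W) (\<lambda>w. wY W u w k)) \<and>
     (\<forall>w k. Vector_Spaces.linear (vs V) (ws W) (\<lambda>u. wY W u w k)) \<and>
     (\<exists>R. \<forall>m. Re m < R \<longrightarrow> wgr W m = {0}) \<and>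
     Vector_Spaces.linear (ws W) (ws W) (wd W) \<and>
     (\<forall>m w. w \<in> wgr W m \<longrightarrow> wd W w = ws W m w) \<and>
     (\<forall>u w k. wd W (wY W u w k) - wY W u (wd W w) k = wY W (vd V u) w k + ws W (of_int k) (wY W u w k)) \<and>
     Vector_Spaces.linear (ws W) (ws W) (wD W) \<and>
     (\<forall>m w. w \<in> wgr W m \<longrightarrow> wD W w \<in> wgr W (m + 1)) \<and>
     (\<forall>w k. wY W (vvac V) w k = (if k = 0 then w else 0)) \<and>
     (\<forall>u w k. ws W (of_int (k + 1)) (wY W u w (k + 1)) = wY W (vD V u) w k) \<and>
     (\<forall>u w k. wD W (wY W u w k) - wY W u (wD W w) k = wY W (vD V u) w k) \<and>
     product_rationality (wgr W) {f. graded_dual (ws W) (wgr W) f} (wY W) \<and>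
     iterate_rationality {f. graded_dual (ws W) (wgr W) f} (vY V) (wY W) \<and>
     associativity {f. graded_dual (ws W) (wgr W) f} (vY V) (wY W)"

definition mobius_left_module :: "('v::ab_group_add, 'x) mosva_data_scheme \<Rightarrow> ('v, 'w::ab_group_add, 'y) lmod_data_scheme \<Rightarrow> bool" where
  "mobius_left_module V W \<longleftrightarrow> left_module V W \<and>
     Vector_Spaces.linear (ws W) (ws W) (wL0 W) \<and>
     Vector_Spaces.linear (ws W) (ws W) (wL1 W) \<and>
     (\<forall>w. wL0 W (wD W w) - wD W (wL0 W w) = wD W w) \<and>
     (\<forall>w. wL0 W (wL1 W w) - wL1 W (wL0 W w) = - wL1 W w) \<and>
     (\<forall>w. wD W (wL1 W w) - wL1 W (wD W w) = ws W (-2) (wL0 W w)) \<and>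
     (\<forall>u w k. wL0 W (wY W u w k) - wY W u (wL0 W w) k = wY W (vd V u) w k + wY W (vD V u) w (k - 1)) \<and>
     (\<forall>u w k. wL1 W (wY W u w k) - wY W u (wL1 W w) k =
        wY W (vL1 V u) w k + ws W 2 (wY W (vd V u) w (k - 1)) + wY W (vD V u) w (k - 2)) \<and>
     (\<forall>m w. w \<in> wgr W m \<longrightarrow> (\<exists>j. ((\<lambda>x. wL0 W x - ws W m x) ^^ j) w = 0))"

text \<open>Opposite vertex operator: coefficient of x^k in
  Y^o_W(u,x)w = Y^L_W(e^{x L(1)} (-x^{-2})^{L(0)} u, x^{-1}) w.  For u of weight n this is
  sum over m of (-1)^n/m! times the coefficient of x^(m-2n-k) in Y^L_W(L(1)^m u, x) w;
  a general u is decomposed into its homogeneous components.\<close>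
definition opp_Y :: "('v::ab_group_add, 'x) mosva_data_scheme \<Rightarrow> ('v, 'w::ab_group_add, 'y) lmod_data_scheme \<Rightarrow> 'v \<Rightarrow> 'w \<Rightarrow> int \<Rightarrow> 'w" where
  "opp_Y V W u w k =
     (\<Sum>n\<in>{n. component (vgr V) n u \<noteq> 0}.
        \<Sum>m\<in>{m. (vL1 V ^^ m) (component (vgr V) n u) \<noteq> 0}.
           ws W ((-1) powi n / of_nat (fact m))
             (wY W ((vL1 V ^^ m) (component (vgr V) n u)) w (int m - 2 * n - k)))"

end

theory Submission
  imports Defs
begin


definition mmono :: "nat \<Rightarrow> nat list \<Rightarrow> complex list \<Rightarrow> complex" where
  "mmono n \<alpha> zs = (\<Prod>i<n. (zs ! i) ^ (\<alpha> ! i))"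

lemma poly_gen:
  assumes "finite X" "\<And>zs. length zs = n \<Longrightarrow> P zs = (\<Sum>x\<in>X. g x * mmono n (h x) zs)"
  shows "polynomial_fn n P"
  unfolding polynomial_fn_def
proof (intro exI conjI allI impI)
  show "finite (h ` X)" using assms(1) by simp
  fix zs :: "complex list" assume l: "length zs = n"
  have "P zs = (\<Sum>x\<in>X. g x * mmono n (h x) zs)" using assms(2)[OF l] .
  also have "\<dots> = (\<Sum>y\<in>h ` X. \<Sum>x\<in>{x. x \<in> X \<and> h x = y}. g x * mmono n (h x) zs)"
    by (rule sum.image_gen[OF assms(1)])
  also have "\<dots> = (\<Sum>y\<in>h ` X. (\<Sum>x\<in>{x. x \<in> X \<and> h x = y}. g x) * mmono n y zs)"
    by (intro sum.cong refl) (auto simp: sum_distrib_right)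
  finally show "P zs = (\<Sum>y\<in>h ` X. (\<Sum>x\<in>{x. x \<in> X \<and> h x = y}. g x) * (\<Prod>i<n. zs ! i ^ (y ! i)))"
    by (simp add: mmono_def)
qed

lemma poly_D:
  assumes "polynomial_fn n P"
  obtains S c where "finite S" "\<And>zs. length zs = n \<Longrightarrow> P zs = (\<Sum>\<alpha>\<in>S. c \<alpha> * mmono n \<alpha> zs)"
  using assms unfolding polynomial_fn_def mmono_def by blast

lemma poly_const: "polynomial_fn n (\<lambda>_. c)"
  by (rule poly_gen[where X="{()}" and g="\<lambda>_. c" and h="\<lambda>_. replicate n 0"]) (auto simp: mmono_def)

lemma poly_var:
  assumes "i < n" shows "polynomial_fn n (\<lambda>zs. zs ! i)"
proof (rule poly_gen[where X="{()}" and g="\<lambda>_. 1" and h="\<lambda>_. (replicate n 0)[i:=1]"])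
  fix zs :: "complex list" assume "length zs = n"
  have "mmono n ((replicate n 0)[i:=1]) zs = (\<Prod>j<n. if j = i then zs ! j else 1)"
    unfolding mmono_def by (intro prod.cong refl) (auto simp: nth_list_update assms)
  also have "\<dots> = zs ! i" using assms by (simp add: prod.delta)
  finally show "zs ! i = (\<Sum>x\<in>{()}. 1 * mmono n ((replicate n 0)[i := 1]) zs)" by simp
qed simp

lemma poly_add:
  assumes "polynomial_fn n P" "polynomial_fn n Q"
  shows "polynomial_fn n (\<lambda>zs. P zs + Q zs)"
proof -
  obtain S c where S: "finite S" "\<And>zs. length zs = n \<Longrightarrow> P zs = (\<Sum>\<alpha>\<in>S. c \<alpha> * mmono n \<alpha> zs)"
    using poly_D[OF assms(1)] by blast
  obtain T d where T: "finite T" "\<And>zs. length zs = n \<Longrightarrow> Q zs = (\<Sum>\<alpha>\<in>T. d \<alpha> * mmono n \<alpha> zs)"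
    using poly_D[OF assms(2)] by blast
  show ?thesis
    by (rule poly_gen[where X="S <+> T" and g="case_sum c d" and h="case_sum id id"])
       (use S T in \<open>auto simp: sum.Plus o_def\<close>)
qed

lemma mmono_add: "mmono n (map (\<lambda>i. a ! i + b ! i) [0..<n]) zs = mmono n a zs * mmono n b zs"
  unfolding mmono_def by (simp add: power_add prod.distrib)

lemma poly_mult:
  assumes "polynomial_fn n P" "polynomial_fn n Q"
  shows "polynomial_fn n (\<lambda>zs. P zs * Q zs)"
proof -
  obtain S c where S: "finite S" "\<And>zs. length zs = n \<Longrightarrow> P zs = (\<Sum>\<alpha>\<in>S. c \<alpha> * mmono n \<alpha> zs)"
    using poly_D[OF assms(1)] by blast
  obtain T d where T: "finite T" "\<And>zs. length zs = n \<Longrightarrow> Q zs = (\<Sum>\<alpha>\<in>T. d \<alpha> * mmono n \<alpha> zs)"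
    using poly_D[OF assms(2)] by blast
  show ?thesis
  proof (rule poly_gen[where X="S \<times> T" and g="\<lambda>(a,b). c a * d b" and h="\<lambda>(a,b). map (\<lambda>i. a ! i + b ! i) [0..<n]"])
    fix zs :: "complex list" assume l: "length zs = n"
    have "P zs * Q zs = (\<Sum>a\<in>S. \<Sum>b\<in>T. (c a * mmono n a zs) * (d b * mmono n b zs))"
      using S(2)[OF l] T(2)[OF l] by (simp add: sum_product)
    also have "\<dots> = (\<Sum>(a,b)\<in>S \<times> T. (c a * mmono n a zs) * (d b * mmono n b zs))"
      by (simp add: sum.cartesian_product)
    also have "\<dots> = (\<Sum>x\<in>S \<times> T. (case x of (a, b) \<Rightarrow> c a * d b) *
         mmono n (case x of (a, b) \<Rightarrow> map (\<lambda>i. a ! i + b ! i) [0..<n]) zs)"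
      by (intro sum.cong refl) (auto simp: mmono_add)
    finally show "P zs * Q zs = \<dots>" .
  qed (use S T in auto)
qed

lemma poly_sum:
  assumes "finite A" "\<And>a. a \<in> A \<Longrightarrow> polynomial_fn n (P a)"
  shows "polynomial_fn n (\<lambda>zs. \<Sum>a\<in>A. P a zs)"
  using assms by (induction A rule: finite_induct) (auto intro: poly_add poly_const)

lemma poly_prod:
  assumes "finite A" "\<And>a. a \<in> A \<Longrightarrow> polynomial_fn n (P a)"
  shows "polynomial_fn n (\<lambda>zs. \<Prod>a\<in>A. P a zs)"
  using assms by (induction A rule: finite_induct) (auto intro: poly_mult poly_const)

lemma poly_pow:
  assumes "polynomial_fn n P" shows "polynomial_fn n (\<lambda>zs. P zs ^ k)"
  by (induction k) (auto intro: poly_mult poly_const assms)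

lemma poly_diff:
  assumes "polynomial_fn n P" "polynomial_fn n Q"
  shows "polynomial_fn n (\<lambda>zs. P zs - Q zs)"
proof -
  have "polynomial_fn n (\<lambda>zs. P zs + (-1) * Q zs)"
    by (intro poly_add poly_mult assms poly_const)
  then show ?thesis by simp
qed



definition reg :: "nat \<Rightarrow> complex list \<Rightarrow> bool" where
  "reg n zs \<longleftrightarrow> length zs = n \<and> (\<forall>i<n. zs ! i \<noteq> 0) \<and> (\<forall>i j. i < j \<and> j < n \<longrightarrow> zs ! i \<noteq> zs ! j)"

definition pairs :: "nat \<Rightarrow> (nat \<times> nat) set" where
  "pairs n = {(i, j). i < j \<and> j < n}"

lemma finite_pairs: "finite (pairs n)"
  by (rule finite_subset[of _ "{..<n} \<times> {..<n}"]) (auto simp: pairs_def)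

definition Dl :: "nat \<Rightarrow> (nat \<Rightarrow> nat \<Rightarrow> nat) \<Rightarrow> complex list \<Rightarrow> complex" where
  "Dl n b zs = (\<Prod>p\<in>pairs n. (zs ! fst p - zs ! snd p) ^ b (fst p) (snd p))"

definition good :: "nat \<Rightarrow> (complex list \<Rightarrow> complex) \<Rightarrow> bool" where
  "good n R \<longleftrightarrow> (\<exists>P N b. polynomial_fn n P \<and>
     (\<forall>zs. reg n zs \<longrightarrow> R zs = P zs / ((\<Prod>i<n. zs ! i) ^ N * Dl n b zs)))"

lemma Dl_nz: "reg n zs \<Longrightarrow> Dl n b zs \<noteq> 0"
  unfolding Dl_def reg_def pairs_def by (auto simp: prod_zero_iff finite_pairs[unfolded pairs_def])

lemma Z_nz: "reg n zs \<Longrightarrow> (\<Prod>i<n. zs ! i) \<noteq> 0"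
  unfolding reg_def by auto

lemma Dl_add: "Dl n (\<lambda>x y. b1 x y + b2 x y) zs = Dl n b1 zs * Dl n b2 zs"
  unfolding Dl_def by (simp add: power_add prod.distrib)

lemma poly_Z: "polynomial_fn n (\<lambda>zs. (\<Prod>i<n. zs ! i))"
  by (intro poly_prod poly_var) auto

lemma poly_Dl: "polynomial_fn n (Dl n b)"
  unfolding Dl_def by (intro poly_prod poly_pow poly_diff poly_var finite_pairs) (auto simp: pairs_def)

lemma good_cong: "good n F \<Longrightarrow> (\<And>zs. reg n zs \<Longrightarrow> G zs = F zs) \<Longrightarrow> good n G"
  unfolding good_def by metis

lemma good_poly: "polynomial_fn n P \<Longrightarrow> good n P"
  unfolding good_def by (rule exI[of _ P], rule exI[of _ 0], rule exI[of _ "\<lambda>_ _. 0"]) (simp add: Dl_def)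

lemma good_const: "good n (\<lambda>_. c)"
  by (rule good_poly[OF poly_const])

lemma good_mult:
  assumes "good n F" "good n G" shows "good n (\<lambda>zs. F zs * G zs)"
proof -
  obtain P N b where A: "polynomial_fn n P" "\<And>zs. reg n zs \<Longrightarrow> F zs = P zs / ((\<Prod>i<n. zs ! i) ^ N * Dl n b zs)"
    using assms(1) unfolding good_def by blast
  obtain Q M c where B: "polynomial_fn n Q" "\<And>zs. reg n zs \<Longrightarrow> G zs = Q zs / ((\<Prod>i<n. zs ! i) ^ M * Dl n c zs)"
    using assms(2) unfolding good_def by blast
  show ?thesis unfolding good_def
  proof (intro exI conjI allI impI)
    show "polynomial_fn n (\<lambda>zs. P zs * Q zs)" by (rule poly_mult[OF A(1) B(1)])
    fix zs assume r: "reg n zs"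
    show "F zs * G zs = P zs * Q zs / ((\<Prod>i<n. zs ! i) ^ (N + M) * Dl n (\<lambda>x y. b x y + c x y) zs)"
      using A(2)[OF r] B(2)[OF r] by (simp add: Dl_add power_add field_simps)
  qed
qed

lemma frac_add_aux:
  fixes a b c P Q :: complex
  assumes "a \<noteq> 0" "b \<noteq> 0" "c \<noteq> 0"
  shows "P / (a ^ N * b) + Q / (a ^ M * c) = (P * (a ^ M * c) + Q * (a ^ N * b)) / (a ^ (N + M) * (b * c))"
  using assms by (simp add: field_simps power_add)

lemma good_add:
  assumes "good n F" "good n G" shows "good n (\<lambda>zs. F zs + G zs)"
proof -
  obtain P N b where A: "polynomial_fn n P" "\<And>zs. reg n zs \<Longrightarrow> F zs = P zs / ((\<Prod>i<n. zs ! i) ^ N * Dl n b zs)"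
    using assms(1) unfolding good_def by blast
  obtain Q M c where B: "polynomial_fn n Q" "\<And>zs. reg n zs \<Longrightarrow> G zs = Q zs / ((\<Prod>i<n. zs ! i) ^ M * Dl n c zs)"
    using assms(2) unfolding good_def by blast
  show ?thesis unfolding good_def
  proof (intro exI conjI allI impI)
    show "polynomial_fn n (\<lambda>zs. P zs * ((\<Prod>i<n. zs ! i) ^ M * Dl n c zs) + Q zs * ((\<Prod>i<n. zs ! i) ^ N * Dl n b zs))"
      by (intro poly_add poly_mult A(1) B(1) poly_pow poly_Z poly_Dl)
    fix zs assume r: "reg n zs"
    have nz: "(\<Prod>i<n. zs ! i) \<noteq> 0" "Dl n b zs \<noteq> 0" "Dl n c zs \<noteq> 0" using r Z_nz Dl_nz by auto
    show "F zs + G zs = (P zs * ((\<Prod>i<n. zs ! i) ^ M * Dl n c zs) + Q zs * ((\<Prod>i<n. zs ! i) ^ N * Dl n b zs)) /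
        ((\<Prod>i<n. zs ! i) ^ (N + M) * Dl n (\<lambda>x y. b x y + c x y) zs)"
      unfolding A(2)[OF r] B(2)[OF r] Dl_add by (rule frac_add_aux[OF nz])
  qed
qed

lemma good_sum:
  assumes "finite A" "\<And>a. a \<in> A \<Longrightarrow> good n (F a)"
  shows "good n (\<lambda>zs. \<Sum>a\<in>A. F a zs)"
  using assms by (induction A rule: finite_induct) (auto intro: good_add good_const)

lemma good_prod:
  assumes "finite A" "\<And>a. a \<in> A \<Longrightarrow> good n (F a)"
  shows "good n (\<lambda>zs. \<Prod>a\<in>A. F a zs)"
  using assms by (induction A rule: finite_induct) (auto intro: good_mult good_const)

lemma good_pow:
  assumes "good n F" shows "good n (\<lambda>zs. F zs ^ k)"
  by (induction k) (auto intro: good_mult good_const assms)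

lemma good_var: "i < n \<Longrightarrow> good n (\<lambda>zs. zs ! i)"
  by (rule good_poly[OF poly_var])

lemma good_inv_var:
  assumes "j < n" shows "good n (\<lambda>zs. inverse (zs ! j))"
  unfolding good_def
proof (intro exI conjI allI impI)
  show "polynomial_fn n (\<lambda>zs. \<Prod>i\<in>{..<n}-{j}. zs ! i)" by (intro poly_prod poly_var) auto
  fix zs assume r: "reg n zs"
  have "(\<Prod>i<n. zs ! i) = zs ! j * (\<Prod>i\<in>{..<n}-{j}. zs ! i)"
    using assms by (simp add: prod.remove)
  moreover have "(\<Prod>i\<in>{..<n}-{j}. zs ! i) \<noteq> 0" "zs ! j \<noteq> 0" using r assms unfolding reg_def by auto
  ultimately show "inverse (zs ! j) = (\<Prod>i\<in>{..<n}-{j}. zs ! i) / ((\<Prod>i<n. zs ! i) ^ 1 * Dl n (\<lambda>_ _. 0) zs)"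
    by (simp add: Dl_def field_simps)
qed

lemma good_inv_diff:
  assumes "p < q" "q < n" shows "good n (\<lambda>zs. inverse (zs ! p - zs ! q))"
  unfolding good_def
proof (intro exI conjI allI impI)
  show "polynomial_fn n (\<lambda>_. 1)" by (rule poly_const)
  fix zs assume r: "reg n zs"
  have "Dl n (\<lambda>x y. if x = p \<and> y = q then 1 else 0) zs = (\<Prod>x\<in>pairs n. if x = (p,q) then zs ! fst x - zs ! snd x else 1)"
    unfolding Dl_def by (intro prod.cong refl) (auto)
  also have "\<dots> = zs ! p - zs ! q" using assms finite_pairs by (simp add: prod.delta' pairs_def)
  finally show "inverse (zs ! p - zs ! q) = 1 / ((\<Prod>i<n. zs ! i) ^ 0 * Dl n (\<lambda>x y. if x = p \<and> y = q then 1 else 0) zs)"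
    by (simp add: field_simps)
qed

lemma good_powi_var:
  assumes "j < n" shows "good n (\<lambda>zs. zs ! j powi e)"
proof (cases "e \<ge> 0")
  case True
  then show ?thesis by (simp add: power_int_def good_pow good_var assms)
next
  case False
  then show ?thesis
    by (simp add: power_int_def good_pow good_inv_var assms)
qed

lemma good_rational: "good n R \<Longrightarrow> rational_poles n R"
  unfolding good_def rational_poles_def
proof (elim exE conjE)
  fix P N b assume "polynomial_fn n P" "\<forall>zs. reg n zs \<longrightarrow> R zs = P zs / ((\<Prod>i<n. zs ! i) ^ N * Dl n b zs)"
  then show "\<exists>P a b. polynomial_fn n P \<and>
     (\<forall>zs. length zs = n \<and> (\<forall>i<n. zs ! i \<noteq> 0) \<and> (\<forall>i j. i < j \<and> j < n \<longrightarrow> zs ! i \<noteq> zs ! j) \<longrightarrow>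
        R zs = P zs / ((\<Prod>i<n. (zs ! i) ^ a i) *
                       (\<Prod>p\<in>{(i, j). i < j \<and> j < n}. (zs ! fst p - zs ! snd p) ^ b (fst p) (snd p))))"
    by (intro exI[of _ P] exI[of _ "\<lambda>_. N"] exI[of _ b]) (simp add: reg_def Dl_def pairs_def prod_power_distrib)
qed



lemma nth_inv_rev: "i < length zs \<Longrightarrow> map inverse (rev zs) ! i = inverse (zs ! (length zs - Suc i))"
  by (simp add: rev_nth)

lemma reg_inv:
  assumes "reg n zs" shows "reg n (map inverse (rev zs))"
  unfolding reg_def
proof (intro conjI allI impI)
  have l: "length zs = n" using assms reg_def by auto
  show "length (map inverse (rev zs)) = n" using l by simp
  fix i assume "i < n"
  then show "map inverse (rev zs) ! i \<noteq> 0" using assms l by (auto simp: rev_nth reg_def)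
next
  fix i j assume ij: "i < j \<and> j < n"
  have l: "length zs = n" using assms reg_def by auto
  have "zs ! (n - Suc i) \<noteq> zs ! (n - Suc j)"
  proof -
    have "n - Suc j < n - Suc i" "n - Suc i < n" using ij by auto
    then show ?thesis using assms unfolding reg_def by (metis)
  qed
  then show "map inverse (rev zs) ! i \<noteq> map inverse (rev zs) ! j"
    using ij l by (simp add: rev_nth)
qed

lemma inv_diff_inv:
  fixes x y :: complex
  assumes "x \<noteq> 0" "y \<noteq> 0" "x \<noteq> y"
  shows "inverse (inverse x - inverse y) = y * x * inverse (y - x)"
  using assms by (simp add: field_simps)

lemma good_transform:
  assumes "rational_poles n R"
  shows "good n (\<lambda>zs. R (map inverse (rev zs)))"
proof -
  obtain P a b where Pab: "polynomial_fn n P"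
    "\<And>zs. length zs = n \<and> (\<forall>i<n. zs ! i \<noteq> 0) \<and> (\<forall>i j. i < j \<and> j < n \<longrightarrow> zs ! i \<noteq> zs ! j) \<Longrightarrow>
        R zs = P zs / ((\<Prod>i<n. (zs ! i) ^ a i) *
                       (\<Prod>p\<in>{(i, j). i < j \<and> j < n}. (zs ! fst p - zs ! snd p) ^ b (fst p) (snd p)))"
    using assms unfolding rational_poles_def by blast
  obtain S c where Sc: "finite S" "\<And>zs. length zs = n \<Longrightarrow> P zs = (\<Sum>\<alpha>\<in>S. c \<alpha> * mmono n \<alpha> zs)"
    using poly_D[OF Pab(1)] by blast
  define F where "F zs = (\<Sum>\<alpha>\<in>S. c \<alpha> * (\<Prod>i<n. inverse (zs ! (n - Suc i)) ^ (\<alpha> ! i))) *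
     (\<Prod>i<n. zs ! (n - Suc i) ^ a i) *
     (\<Prod>p\<in>pairs n. (zs ! (n - Suc (snd p)) * zs ! (n - Suc (fst p)) *
          inverse (zs ! (n - Suc (snd p)) - zs ! (n - Suc (fst p)))) ^ (b (fst p) (snd p)))" for zs
  have gp: "good n (\<lambda>zs. (zs ! (n - Suc (snd p)) * zs ! (n - Suc (fst p)) *
          inverse (zs ! (n - Suc (snd p)) - zs ! (n - Suc (fst p)))) ^ (b (fst p) (snd p)))"
    if p: "p \<in> pairs n" for p
  proof -
    from p have "n - Suc (snd p) < n - Suc (fst p)" "n - Suc (fst p) < n" "n - Suc (snd p) < n"
      by (auto simp: pairs_def)
    then show ?thesis
      by (intro good_pow good_mult good_var good_inv_diff)
  qed
  have g1: "good n (\<lambda>zs. \<Sum>\<alpha>\<in>S. c \<alpha> * (\<Prod>i<n. inverse (zs ! (n - Suc i)) ^ (\<alpha> ! i)))"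
    by (intro good_sum good_mult good_const good_prod good_pow good_inv_var Sc(1) finite_lessThan) auto
  have g2: "good n (\<lambda>zs. \<Prod>i<n. zs ! (n - Suc i) ^ a i)"
    by (intro good_prod good_pow good_var finite_lessThan) auto
  have gF: "good n F"
    unfolding F_def by (intro good_mult g1 g2 good_prod finite_pairs gp)
  show ?thesis
  proof (rule good_cong[OF gF])
    fix zs assume r: "reg n zs"
    define \<zeta> where "\<zeta> = map inverse (rev zs)"
    have l: "length zs = n" using r reg_def by auto
    have r': "reg n \<zeta>" unfolding \<zeta>_def by (rule reg_inv[OF r])
    have zi: "\<And>i. i < n \<Longrightarrow> \<zeta> ! i = inverse (zs ! (n - Suc i))" unfolding \<zeta>_def using l by (simp add: rev_nth)
    have nz: "\<And>i. i < n \<Longrightarrow> zs ! i \<noteq> 0" using r reg_def by auto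
    have R\<zeta>: "R \<zeta> = P \<zeta> / ((\<Prod>i<n. (\<zeta> ! i) ^ a i) *
                       (\<Prod>p\<in>pairs n. (\<zeta> ! fst p - \<zeta> ! snd p) ^ b (fst p) (snd p)))"
      using Pab(2)[of \<zeta>] r' unfolding reg_def pairs_def by blast
    have P\<zeta>: "P \<zeta> = (\<Sum>\<alpha>\<in>S. c \<alpha> * (\<Prod>i<n. inverse (zs ! (n - Suc i)) ^ (\<alpha> ! i)))"
      using Sc(2)[of \<zeta>] r' unfolding mmono_def reg_def by (simp add: zi)
    have A: "inverse (\<Prod>i<n. (\<zeta> ! i) ^ a i) = (\<Prod>i<n. zs ! (n - Suc i) ^ a i)"
      by (simp add: prod_inversef[symmetric] o_def zi power_inverse)
    have B: "inverse (\<Prod>p\<in>pairs n. (\<zeta> ! fst p - \<zeta> ! snd p) ^ b (fst p) (snd p)) =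
      (\<Prod>p\<in>pairs n. (zs ! (n - Suc (snd p)) * zs ! (n - Suc (fst p)) *
          inverse (zs ! (n - Suc (snd p)) - zs ! (n - Suc (fst p)))) ^ (b (fst p) (snd p)))"
      unfolding prod_inversef[symmetric] o_def
    proof (intro prod.cong refl)
      fix p assume p: "p \<in> pairs n"
      then have ij: "fst p < snd p" "snd p < n" by (auto simp: pairs_def)
      have ne: "zs ! (n - Suc (fst p)) \<noteq> zs ! (n - Suc (snd p))"
        using r ij unfolding reg_def by (metis Suc_le_eq diff_less_mono2 diff_less lessI less_trans zero_less_Suc order.strict_trans1)
      have "inverse (\<zeta> ! fst p - \<zeta> ! snd p) = zs ! (n - Suc (snd p)) * zs ! (n - Suc (fst p)) *
          inverse (zs ! (n - Suc (snd p)) - zs ! (n - Suc (fst p)))"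
        using ij by (simp add: zi inv_diff_inv nz ne)
      then show "inverse ((\<zeta> ! fst p - \<zeta> ! snd p) ^ b (fst p) (snd p)) = \<dots> ^ b (fst p) (snd p)"
        by (metis power_inverse)
    qed
    show "R (map inverse (rev zs)) = F zs"
      unfolding \<zeta>_def[symmetric] R\<zeta> divide_inverse inverse_mult_distrib A B P\<zeta> F_def
      by (simp add: mult.assoc)
  qed
qed



fun chs :: "('u \<Rightarrow> 'a set) \<Rightarrow> 'u list \<Rightarrow> 'a list set" where
  "chs T [] = {[]}"
| "chs T (u # us) = (\<lambda>(a, as). a # as) ` (T u \<times> chs T us)"

lemma finite_chs: "(\<And>u. finite (T u)) \<Longrightarrow> finite (chs T us)"
  by (induction us) auto

lemma chs_length: "as \<in> chs T us \<Longrightarrow> length as = length us"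
  by (induction us arbitrary: as) auto

lemma lin_sum: "Vector_Spaces.linear s1 s2 f \<Longrightarrow> f (sum g A) = (\<Sum>a\<in>A. f (g a))"
  using module_hom.sum linear_iff_module_hom by metis

lemma lin_scale: "Vector_Spaces.linear s1 s2 f \<Longrightarrow> f (s1 r x) = s2 r (f x)"
  using module_hom.scale linear_iff_module_hom by metis

lemma ops_expand:
  assumes vs: "vector_space s" and lin: "\<And>u k. Vector_Spaces.linear s s (\<lambda>w. Y u w k)"
    and Yo: "\<And>u w k. Yo u w k = (\<Sum>a\<in>T u. s (c a) (Y (v u a) w (e a - k)))"
    and fin: "\<And>u. finite (T u)"
  shows "length ks = length us \<Longrightarrow> ops Yo us ks w =
     (\<Sum>as\<in>chs T us. s (prod_list (map c as)) (ops Y (map2 v us as) (map2 (\<lambda>a k. e a - k) as ks) w))"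
proof (induction us arbitrary: ks)
  have md: "module s" using vs by (simp add: module_iff_vector_space)
  case Nil
  then show ?case using module.scale_one[OF md] by simp
next
  case (Cons u us)
  have md: "module s" using vs by (simp add: module_iff_vector_space)
  then obtain k ks' where ks: "ks = k # ks'" and l: "length ks' = length us" using Cons.prems by (cases ks) auto
  define G where "G as = ops Y (map2 v us as) (map2 (\<lambda>a k. e a - k) as ks') w" for as
  have "ops Yo (u # us) ks w = Yo u (ops Yo us ks' w) k" by (simp add: ks)
  also have "\<dots> = (\<Sum>a\<in>T u. s (c a) (Y (v u a) (\<Sum>as\<in>chs T us. s (prod_list (map c as)) (G as)) (e a - k)))"
    unfolding Yo Cons.IH[OF l] G_def ..
  also have "\<dots> = (\<Sum>a\<in>T u. \<Sum>as\<in>chs T us. s (c a * prod_list (map c as)) (Y (v u a) (G as) (e a - k)))"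
    by (simp add: lin_sum[OF lin] lin_scale[OF lin] module.scale_sum_right[OF md]
        module.scale_scale[OF md])
  also have "\<dots> = (\<Sum>(a, as)\<in>T u \<times> chs T us. s (c a * prod_list (map c as)) (Y (v u a) (G as) (e a - k)))"
    by (simp add: sum.cartesian_product)
  also have "\<dots> = (\<Sum>bs\<in>chs T (u # us). s (prod_list (map c bs)) (ops Y (map2 v (u # us) bs) (map2 (\<lambda>a k. e a - k) bs ks) w))"
    by (simp add: sum.reindex inj_on_def ks G_def case_prod_beta)
  finally show ?case .
qed



definition TT :: "('v::ab_group_add, 'x) mosva_data_scheme \<Rightarrow> 'v \<Rightarrow> (int \<times> nat) set" where
  "TT V u = (if finite {n. component (vgr V) n u \<noteq> 0}
     then (SIGMA n:{n. component (vgr V) n u \<noteq> 0}.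
            (if finite {m. (vL1 V ^^ m) (component (vgr V) n u) \<noteq> 0}
             then {m. (vL1 V ^^ m) (component (vgr V) n u) \<noteq> 0} else {}))
     else {})"

definition cc :: "int \<times> nat \<Rightarrow> complex" where "cc a = (-1) powi (fst a) / of_nat (fact (snd a))"
definition vv :: "('v::ab_group_add, 'x) mosva_data_scheme \<Rightarrow> 'v \<Rightarrow> int \<times> nat \<Rightarrow> 'v" where
  "vv V u a = (vL1 V ^^ snd a) (component (vgr V) (fst a) u)"
definition ee :: "int \<times> nat \<Rightarrow> int" where "ee a = int (snd a) - 2 * fst a"

lemma finite_TT: "finite (TT V u)"
  unfolding TT_def by (auto intro!: finite_SigmaI)

lemma opp_Y_eq: "opp_Y V W u w k = (\<Sum>a\<in>TT V u. ws W (cc a) (wY W (vv V u a) w (ee a - k)))"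
proof (cases "finite {n. component (vgr V) n u \<noteq> 0}")
  case True
  have "opp_Y V W u w k = (\<Sum>n\<in>{n. component (vgr V) n u \<noteq> 0}.
     \<Sum>m\<in>(if finite {m. (vL1 V ^^ m) (component (vgr V) n u) \<noteq> 0}
             then {m. (vL1 V ^^ m) (component (vgr V) n u) \<noteq> 0} else {}).
           ws W (cc (n, m)) (wY W (vv V u (n, m)) w (ee (n, m) - k)))"
    unfolding opp_Y_def by (rule sum.cong[OF refl]) (auto simp: cc_def vv_def ee_def algebra_simps intro!: sum.cong)
  also have "\<dots> = (\<Sum>a\<in>TT V u. ws W (cc a) (wY W (vv V u a) w (ee a - k)))"
    unfolding TT_def using True by (subst sum.Sigma) auto
  finally show ?thesis .
next
  case False
  then show ?thesis unfolding opp_Y_def TT_def by simp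
qed

lemma has_sum_finsum:
  fixes f :: "'i \<Rightarrow> 'a \<Rightarrow> 'b::topological_comm_monoid_add"
  assumes "finite I" "\<And>i. i \<in> I \<Longrightarrow> (f i has_sum s i) A"
  shows "((\<lambda>x. \<Sum>i\<in>I. f i x) has_sum (\<Sum>i\<in>I. s i)) A"
  using assms by (induction I rule: finite_induct) (auto intro: has_sum_add)

lemma region_inv:
  assumes "region_desc zs" shows "region_desc (map inverse (rev zs))"
  unfolding region_desc_def
proof (intro conjI allI impI)
  fix i assume i: "Suc i < length (map inverse (rev zs))"
  let ?n = "length zs"
  have j: "Suc (?n - Suc (Suc i)) < ?n" "Suc (?n - Suc (Suc i)) = ?n - Suc i" using i by auto
  have "norm (zs ! (?n - Suc i)) < norm (zs ! (?n - Suc (Suc i)))"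
    using assms j unfolding region_desc_def by metis
  moreover have "zs ! (?n - Suc i) \<noteq> 0" using assms i unfolding region_desc_def by auto
  ultimately have "inverse (norm (zs ! (?n - Suc (Suc i)))) < inverse (norm (zs ! (?n - Suc i)))"
    by (intro less_imp_inverse_less) auto
  then show "norm (map inverse (rev zs) ! Suc i) < norm (map inverse (rev zs) ! i)"
    using i by (simp add: rev_nth norm_inverse)
next
  fix i assume "i < length (map inverse (rev zs))"
  then show "map inverse (rev zs) ! i \<noteq> 0" using assms unfolding region_desc_def by (auto simp: rev_nth)
qed



lemma powi_aux:
  fixes x :: complex
  assumes "x \<noteq> 0" shows "x powi e * inverse x powi (e - k) = x powi k"
proof -
  have "x powi e * inverse x powi (e - k) = x powi e / x powi (e - k)"
    by (simp add: power_int_inverse divide_inverse)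
  also have "\<dots> = x powi (e - (e - k))" using assms by (simp add: power_int_diff)
  finally show ?thesis by simp
qed

theorem mainTheorem16:
  fixes V :: "('v::ab_group_add) mosva_data"
    and W :: "('v, 'w::ab_group_add) lmod_data"
  assumes "mobius_mosva V"
    and "mobius_left_module V W"
  shows "\<forall>n us w f. n \<ge> 1 \<and> length us = n \<and> graded_dual (ws W) (wgr W) f \<longrightarrow>
           (\<exists>R. rational_poles n R \<and>
              (\<forall>zs. length zs = n \<and> region_desc zs \<longrightarrow>
                 abs_conv_to (\<lambda>ks. f (ops (opp_Y V W) (rev us) ks w) * monom (rev zs) ks)
                             {ks. length ks = n} (R zs)))"
proof (intro allI impI, elim conjE)
  fix n :: nat and us :: "'v list" and w :: 'w and f :: "'w \<Rightarrow> complex"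
  assume lus: "length us = n" and fd: "graded_dual (ws W) (wgr W) f"
  have LM: "left_module V W" using assms(2) unfolding mobius_left_module_def by blast
  have vs: "vector_space (ws W)" using LM unfolding left_module_def graded_space_def by auto
  have lin: "\<And>u k. Vector_Spaces.linear (ws W) (ws W) (\<lambda>w. wY W u w k)" using LM unfolding left_module_def by auto
  have PR: "product_rationality (wgr W) {f. graded_dual (ws W) (wgr W) f} (wY W)"
    using LM unfolding left_module_def by auto
  have flin: "Vector_Spaces.linear (ws W) (*) f" using fd unfolding graded_dual_def by blast
  define U where "U = rev us"
  define CH where "CH = chs (TT V) U"
  define C where "C as = prod_list (map cc as)" for as
  define VV where "VV as = map2 (vv V) U as" for as
  define J where "J as ks = map2 (\<lambda>a k. ee a - k) as ks" for as :: "(int \<times> nat) list" and ks :: "int list"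
  have lU: "length U = n" using lus U_def by simp
  have finCH: "finite CH" unfolding CH_def by (intro finite_chs finite_TT)
  have lCH: "\<And>as. as \<in> CH \<Longrightarrow> length as = n" unfolding CH_def using chs_length lU by metis
  have lVV: "\<And>as. as \<in> CH \<Longrightarrow> length (VV as) = n" unfolding VV_def using lCH lU by simp
  have expand: "f (ops (opp_Y V W) U ks w) = (\<Sum>as\<in>CH. C as * f (ops (wY W) (VV as) (J as ks) w))"
    if lk: "length ks = n" for ks
  proof -
    have "ops (opp_Y V W) U ks w = (\<Sum>as\<in>CH. ws W (C as) (ops (wY W) (VV as) (J as ks) w))"
      unfolding CH_def C_def VV_def J_def
      by (rule ops_expand[where s="ws W" and Y="wY W" and Yo="opp_Y V W" and T="TT V" and c=cc
            and v="vv V" and e=ee, OF vs lin opp_Y_eq finite_TT]) (use lk lU in simp)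
    then show ?thesis by (simp add: lin_sum[OF flin] lin_scale[OF flin])
  qed
  have "\<forall>as\<in>CH. \<exists>R. rational_poles n R \<and> (\<forall>zs. length zs = n \<and> region_desc zs \<longrightarrow>
          abs_conv_to (prod_series (wY W) f (VV as) zs w) {ks. length ks = n} (R zs))"
  proof
    fix as assume as: "as \<in> CH"
    from PR have "\<forall>n us w f. f \<in> {f. graded_dual (ws W) (wgr W) f} \<and> length us = n \<longrightarrow>
     (\<exists>R. rational_poles n R \<and> (\<forall>zs. length zs = n \<and> region_desc zs \<longrightarrow>
          abs_conv_to (prod_series (wY W) f us zs w) {ks. length ks = n} (R zs)))"
      unfolding product_rationality_def by blast
    then show "\<exists>R. rational_poles n R \<and> (\<forall>zs. length zs = n \<and> region_desc zs \<longrightarrow>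
          abs_conv_to (prod_series (wY W) f (VV as) zs w) {ks. length ks = n} (R zs))"
      using fd lVV[OF as] by blast
  qed
  from bchoice[OF this] obtain RR where RR0: "\<forall>as\<in>CH. rational_poles n (RR as) \<and> (\<forall>zs. length zs = n \<and> region_desc zs \<longrightarrow>
          abs_conv_to (prod_series (wY W) f (VV as) zs w) {ks. length ks = n} (RR as zs))"
    by blast
  then have RR: "\<And>as. as \<in> CH \<Longrightarrow> rational_poles n (RR as) \<and> (\<forall>zs. length zs = n \<and> region_desc zs \<longrightarrow>
          abs_conv_to (prod_series (wY W) f (VV as) zs w) {ks. length ks = n} (RR as zs))"
    by blast
  define Ev where "Ev as zs = (\<Prod>i<n. (rev zs ! i) powi ee (as ! i))" for as :: "(int \<times> nat) list" and zs :: "complex list"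
  define Rf where "Rf zs = (\<Sum>as\<in>CH. C as * Ev as zs * RR as (map inverse (rev zs)))" for zs
  have gEv: "good n (Ev as)" for as
  proof (rule good_cong)
    show "good n (\<lambda>zs. \<Prod>i<n. zs ! (n - Suc i) powi ee (as ! i))"
      by (intro good_prod good_powi_var finite_lessThan) auto
    fix zs assume "reg n zs"
    then have "length zs = n" by (simp add: reg_def)
    then show "Ev as zs = (\<Prod>i<n. zs ! (n - Suc i) powi ee (as ! i))"
      unfolding Ev_def by (intro prod.cong refl) (simp add: rev_nth)
  qed
  show "\<exists>R. rational_poles n R \<and>
              (\<forall>zs. length zs = n \<and> region_desc zs \<longrightarrow>
                 abs_conv_to (\<lambda>ks. f (ops (opp_Y V W) (rev us) ks w) * monom (rev zs) ks)
                             {ks. length ks = n} (R zs))"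
  proof (intro exI conjI allI impI)
    show "rational_poles n Rf"
      unfolding Rf_def
    proof (rule good_rational, rule good_sum[OF finCH])
      fix as assume as: "as \<in> CH"
      have "good n (\<lambda>zs. RR as (map inverse (rev zs)))"
        using RR[OF as] by (intro good_transform) blast
      then show "good n (\<lambda>zs. C as * Ev as zs * RR as (map inverse (rev zs)))"
        by (intro good_mult[OF good_mult[OF good_const gEv]])
    qed
    fix zs assume zsa: "length zs = n \<and> region_desc zs"
    define \<zeta> where "\<zeta> = map inverse (rev zs)"
    have lz: "length zs = n" using zsa by auto
    have rd: "region_desc \<zeta>" unfolding \<zeta>_def using zsa region_inv by auto
    have l\<zeta>: "length \<zeta> = n" unfolding \<zeta>_def using lz by simp
    have nz: "\<And>i. i < n \<Longrightarrow> rev zs ! i \<noteq> 0"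
      using zsa unfolding region_desc_def by (auto simp: rev_nth)
    have conv: "\<And>as. as \<in> CH \<Longrightarrow> abs_conv_to (prod_series (wY W) f (VV as) \<zeta> w) {ks. length ks = n} (RR as \<zeta>)"
      using RR rd l\<zeta> by blast
    have lJ: "\<And>as ks. as \<in> CH \<Longrightarrow> length ks = n \<Longrightarrow> length (J as ks) = n"
      unfolding J_def using lCH by simp
    have nJ: "\<And>as ks i. as \<in> CH \<Longrightarrow> length ks = n \<Longrightarrow> i < n \<Longrightarrow> J as ks ! i = ee (as ! i) - ks ! i"
      unfolding J_def using lCH by simp
    have JJ: "\<And>as ks. as \<in> CH \<Longrightarrow> length ks = n \<Longrightarrow> J as (J as ks) = ks"
      by (rule nth_equalityI) (auto simp: lJ nJ)
    have bij: "bij_betw (J as) {ks. length ks = n} {ks. length ks = n}" if as: "as \<in> CH" for as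
      by (rule bij_betw_byWitness[where f'="J as"]) (auto simp: JJ[OF as] lJ[OF as])
    have mon: "monom (rev zs) ks = Ev as zs * monom \<zeta> (J as ks)"
      if as: "as \<in> CH" and lk: "length ks = n" for as ks
    proof -
      have "Ev as zs * monom \<zeta> (J as ks) = (\<Prod>i<n. (rev zs ! i) powi ee (as ! i) *
            inverse (rev zs ! i) powi (ee (as ! i) - ks ! i))"
        unfolding Ev_def monom_def l\<zeta> prod.distrib[symmetric]
        by (intro prod.cong refl) (simp add: nJ[OF as lk] \<zeta>_def lz)
      also have "\<dots> = (\<Prod>i<n. (rev zs ! i) powi (ks ! i))"
        by (intro prod.cong refl) (simp add: powi_aux nz)
      also have "\<dots> = monom (rev zs) ks" unfolding monom_def using lz by simp
      finally show ?thesis by simp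
    qed
    have trm: "f (ops (opp_Y V W) (rev us) ks w) * monom (rev zs) ks =
       (\<Sum>as\<in>CH. (C as * Ev as zs) * prod_series (wY W) f (VV as) \<zeta> w (J as ks))"
      if lk: "length ks = n" for ks
      unfolding U_def[symmetric] expand[OF lk] sum_distrib_right prod_series_def
      by (intro sum.cong refl) (simp add: mon[OF _ lk] mult_ac)
    have hs: "((\<lambda>ks. \<Sum>as\<in>CH. (C as * Ev as zs) * prod_series (wY W) f (VV as) \<zeta> w (J as ks))
        has_sum Rf zs) {ks. length ks = n}"
      unfolding Rf_def \<zeta>_def[symmetric]
    proof (rule has_sum_finsum[OF finCH])
      fix as assume as: "as \<in> CH"
      have "((\<lambda>ks. prod_series (wY W) f (VV as) \<zeta> w (J as ks)) has_sum RR as \<zeta>) {ks. length ks = n}"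
        using conv[OF as] has_sum_reindex_bij_betw[OF bij[OF as]] unfolding abs_conv_to_def by blast
      then show "((\<lambda>ks. (C as * Ev as zs) * prod_series (wY W) f (VV as) \<zeta> w (J as ks)) has_sum
          (C as * Ev as zs * RR as \<zeta>)) {ks. length ks = n}"
        by (rule has_sum_cmult_right)
    qed
    have ns: "(\<lambda>ks. \<Sum>as\<in>CH. norm (C as * Ev as zs) * norm (prod_series (wY W) f (VV as) \<zeta> w (J as ks)))
        summable_on {ks. length ks = n}"
    proof -
      have "((\<lambda>ks. \<Sum>as\<in>CH. norm (C as * Ev as zs) * norm (prod_series (wY W) f (VV as) \<zeta> w (J as ks)))
        has_sum (\<Sum>as\<in>CH. infsum (\<lambda>ks. norm (C as * Ev as zs) * norm (prod_series (wY W) f (VV as) \<zeta> w (J as ks)))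
           {ks. length ks = n})) {ks. length ks = n}"
      proof (rule has_sum_finsum[OF finCH])
        fix as assume as: "as \<in> CH"
        have s1: "(\<lambda>js. norm (prod_series (wY W) f (VV as) \<zeta> w js)) summable_on {ks. length ks = n}"
          using conv[OF as] unfolding abs_conv_to_def by blast
        have "(\<lambda>ks. norm (prod_series (wY W) f (VV as) \<zeta> w (J as ks))) summable_on {ks. length ks = n}"
          using summable_on_reindex_bij_betw[OF bij[OF as], where f="\<lambda>js. norm (prod_series (wY W) f (VV as) \<zeta> w js)"] s1
          by simp
        then have "(\<lambda>ks. norm (C as * Ev as zs) * norm (prod_series (wY W) f (VV as) \<zeta> w (J as ks)))
            summable_on {ks. length ks = n}"
          by (rule summable_on_cmult_right)
        then show "((\<lambda>ks. norm (C as * Ev as zs) * norm (prod_series (wY W) f (VV as) \<zeta> w (J as ks))) has_sum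
          infsum (\<lambda>ks. norm (C as * Ev as zs) * norm (prod_series (wY W) f (VV as) \<zeta> w (J as ks))) {ks. length ks = n})
          {ks. length ks = n}"
          by (rule summable_iff_has_sum_infsum[THEN iffD1])
      qed
      then show ?thesis by (rule has_sum_imp_summable)
    qed
    show "abs_conv_to (\<lambda>ks. f (ops (opp_Y V W) (rev us) ks w) * monom (rev zs) ks) {ks. length ks = n} (Rf zs)"
      unfolding abs_conv_to_def
    proof
      show "((\<lambda>ks. f (ops (opp_Y V W) (rev us) ks w) * monom (rev zs) ks) has_sum Rf zs) {ks. length ks = n}"
        using hs by (subst has_sum_cong[where g="\<lambda>ks. \<Sum>as\<in>CH. (C as * Ev as zs) * prod_series (wY W) f (VV as) \<zeta> w (J as ks)"])
          (auto simp: trm)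
      show "(\<lambda>ks. norm (f (ops (opp_Y V W) (rev us) ks w) * monom (rev zs) ks)) summable_on {ks. length ks = n}"
      proof (rule summable_on_comparison_test[OF ns])
        fix ks :: "int list" assume "ks \<in> {ks. length ks = n}"
        then have lk: "length ks = n" by simp
        show "norm (f (ops (opp_Y V W) (rev us) ks w) * monom (rev zs) ks) \<le>
          (\<Sum>as\<in>CH. norm (C as * Ev as zs) * norm (prod_series (wY W) f (VV as) \<zeta> w (J as ks)))"
          unfolding trm[OF lk] by (rule order.trans[OF norm_sum]) (simp add: norm_mult)
      qed simp
    qed
  qed
qed


end
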